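(* Let $(P_s)_{s\in\Gamma}$ be a family of bounded linear projections on a Banach space $X$ indexed by a directed poset $\Gamma$ such that: (1) $X=\bigcup_{s\in\Gamma}P_sX$ and each $P_sX$ is separable; (2) $s\leqslant t$ implies $P_s=P_s\circ P_t=P_t\circ P_s$; (3) whenever $s_0<s_1<\dots$ in $\Gamma$, $t=\sup_ns_n$ exists in $\Gamma$ and $P_tX=\overline{\bigcup_nP_{s_n}X}$. Then there exists a closed cofinal set $\Gamma'\subseteq\Gamma$ such that $\sup_{s\in\Gamma'}\|P_s\|<\infty$.
   Context: A subset $\Gamma'$ of a poset $\Gamma$ is cofinal if for every $s\in\Gamma$ there is $t\in\Gamma'$ with $s\leqslant t$; it is closed if $\sup_n s_n\in\Gamma'$ whenever $s_0<s_1<\dots$ is a sequence in $\Gamma'$ (whose supremum exists in $\Gamma$). *)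

theory Defs
  imports "HOL-Analysis.Analysis"
begin

definition is_seq_sup :: "(nat \<Rightarrow> 'i::order) \<Rightarrow> 'i \<Rightarrow> bool" where
  "is_seq_sup s t \<longleftrightarrow> (\<forall>n. s n \<le> t) \<and> (\<forall>u. (\<forall>n. s n \<le> u) \<longrightarrow> t \<le> u)"

definition cofinal_in :: "'i::order set \<Rightarrow> bool" where
  "cofinal_in G \<longleftrightarrow> (\<forall>s. \<exists>t\<in>G. s \<le> t)"

definition closed_in_poset :: "'i::order set \<Rightarrow> bool" where
  "closed_in_poset G \<longleftrightarrow>
     (\<forall>s t. (\<forall>n. s n \<in> G \<and> s n < s (Suc n)) \<and> is_seq_sup s t \<longrightarrow> t \<in> G)"

end

theory Submission
  imports Defs
begin

lemma seq_sup_unique: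
  "is_seq_sup s t \<Longrightarrow> is_seq_sup s t' \<Longrightarrow> t = t'"
  unfolding is_seq_sup_def by (metis order.antisym)

lemma closedC:
  fixes P :: "'i::order \<Rightarrow> ('a::banach \<Rightarrow>\<^sub>L 'a)"
  assumes compat: "\<forall>s t. s \<le> t \<longrightarrow> P s = P s o\<^sub>L P t \<and> P s = P t o\<^sub>L P s"
    and chains: "\<forall>s. (\<forall>n. s n < s (Suc n)) \<longrightarrow>
       (\<exists>t. is_seq_sup s t \<and>
            range (blinfun_apply (P t)) = closure (\<Union>n. range (blinfun_apply (P (s n)))))"
    and C: "0 \<le> C"
  shows "closed_in_poset {s. norm (P s) \<le> C}"
  unfolding closed_in_poset_def
proof (intro allI impI)
  fix s :: "nat \<Rightarrow> 'i" and t
  assume a: "(\<forall>n. s n \<in> {s. norm (P s) \<le> C} \<and> s n < s (Suc n)) \<and> is_seq_sup s t"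
  then obtain t' where t': "is_seq_sup s t'"
    "range (blinfun_apply (P t')) = closure (\<Union>n. range (blinfun_apply (P (s n))))"
    using chains by blast
  have tt: "t' = t" using seq_sup_unique t'(1) a by blast
  have bnd: "\<And>n. norm (P (s n)) \<le> C" using a by auto
  have le: "\<And>n. s n \<le> t" using a unfolding is_seq_sup_def by blast
  have "norm (P t) \<le> C"
  proof (rule norm_blinfun_bound[OF C])
    fix x
    let ?y = "blinfun_apply (P t) x"
    show "norm ?y \<le> C * norm x"
    proof (rule field_le_epsilon)
      fix e :: real assume e: "0 < e"
      have "?y \<in> closure (\<Union>n. range (blinfun_apply (P (s n))))"
        using t'(2) tt by auto
      moreover have "e / (C+1) > 0" using e C by auto
      ultimately obtain z where z: "z \<in> (\<Union>n. range (blinfun_apply (P (s n))))"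
        "dist z ?y < e / (C+1)"
        unfolding closure_approachable by blast
      then obtain m w where zw: "z = blinfun_apply (P (s m)) w" by blast
      have "P (s m) = P (s m) o\<^sub>L P (s m)" using compat by blast
      hence pz: "blinfun_apply (P (s m)) z = z" using zw
        by (metis blinfun_apply_blinfun_compose)
      have "P (s m) = P (s m) o\<^sub>L P t" using compat le by blast
      hence px: "blinfun_apply (P (s m)) x = blinfun_apply (P (s m)) ?y"
        by (metis blinfun_apply_blinfun_compose)
      have eq: "?y = blinfun_apply (P (s m)) x + blinfun_apply (P (s m)) (z - ?y) + (?y - z)"
        using px pz by (simp add: blinfun.diff_right)
      have d: "norm (z - ?y) < e / (C+1)" using z(2) by (simp add: dist_norm)
      have "norm ?y \<le> norm (blinfun_apply (P (s m)) x) + norm (blinfun_apply (P (s m)) (z - ?y)) + norm (?y - z)"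
        by (subst eq) (meson norm_triangle_ineq order_trans add_right_mono)
      also have "\<dots> \<le> C * norm x + C * norm (z - ?y) + norm (z - ?y)"
      proof -
        have "norm (blinfun_apply (P (s m)) x) \<le> C * norm x"
          by (meson bnd norm_blinfun mult_right_mono norm_ge_zero order_trans)
        moreover have "norm (blinfun_apply (P (s m)) (z - ?y)) \<le> C * norm (z - ?y)"
          by (meson bnd norm_blinfun mult_right_mono norm_ge_zero order_trans)
        ultimately show ?thesis by (simp add: norm_minus_commute)
      qed
      also have "\<dots> = C * norm x + (C+1) * norm (z - ?y)" by (simp add: algebra_simps)
      also have "\<dots> \<le> C * norm x + (C+1) * (e / (C+1))"
        using d C by (intro add_left_mono mult_left_mono) auto
      also have "\<dots> = C * norm x + e" using C by simp
      finally show "norm ?y \<le> C * norm x + e" .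
    qed
  qed
  thus "t \<in> {s. norm (P s) \<le> C}" by simp
qed

fun chainseq :: "('i \<Rightarrow> 'i \<Rightarrow> 'i) \<Rightarrow> (nat \<Rightarrow> 'i) \<Rightarrow> nat \<Rightarrow> 'i" where
  "chainseq N S 0 = N (S 0) (S 0)"
| "chainseq N S (Suc n) = N (chainseq N S n) (S (Suc n))"

theorem proposition4p1:
  fixes P :: "'i::order \<Rightarrow> ('a::banach \<Rightarrow>\<^sub>L 'a)"
  assumes directed: "\<forall>s t::'i. \<exists>u. s \<le> u \<and> t \<le> u"
    and proj: "\<forall>s. P s o\<^sub>L P s = P s"
    and cover: "(\<Union>s. range (blinfun_apply (P s))) = UNIV"
    and sep: "\<forall>s. separable_space (subtopology euclidean (range (blinfun_apply (P s))))"
    and compat: "\<forall>s t. s \<le> t \<longrightarrow> P s = P s o\<^sub>L P t \<and> P s = P t o\<^sub>L P s"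
    and chains: "\<forall>s. (\<forall>n. s n < s (Suc n)) \<longrightarrow>
       (\<exists>t. is_seq_sup s t \<and>
            range (blinfun_apply (P t)) = closure (\<Union>n. range (blinfun_apply (P (s n)))))"
  shows "\<exists>G. closed_in_poset G \<and> cofinal_in G \<and> (\<exists>C. \<forall>s\<in>G. norm (P s) \<le> C)"
proof (cases "\<exists>m::'i. \<forall>s. s \<le> m")
  case True
  then obtain m :: 'i where m: "\<forall>s. s \<le> m" by blast
  have "closed_in_poset {m}" unfolding closed_in_poset_def
    by (metis less_irrefl singletonD)
  moreover have "cofinal_in {m}" unfolding cofinal_in_def using m by blast
  ultimately show ?thesis by (intro exI[of _ "{m}"]) auto
next
  case False
  have up: "\<forall>a b::'i. \<exists>u. a < u \<and> b \<le> u"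
  proof (intro allI)
    fix a b :: 'i
    obtain v where v: "a \<le> v" "b \<le> v" using directed by blast
    obtain w where "\<not> w \<le> v" using False by blast
    then obtain u where u: "v \<le> u" "w \<le> u" using directed by blast
    have "v < u" using u \<open>\<not> w \<le> v\<close> by (metis order.not_eq_order_implies_strict)
    thus "\<exists>u. a < u \<and> b \<le> u" using v u by (meson order.trans le_less_trans)
  qed
  then obtain N :: "'i \<Rightarrow> 'i \<Rightarrow> 'i" where N: "\<And>a b. a < N a b \<and> b \<le> N a b" by metis
  show ?thesis
  proof (rule ccontr)
    assume nc: "\<not> ?thesis"
    have "\<forall>n::nat. \<exists>s::'i. \<forall>t. s \<le> t \<longrightarrow> real n < norm (P t)"
    proof
      fix n :: nat
      have "\<not> cofinal_in {s. norm (P s) \<le> real n}"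
        using nc closedC[OF compat chains, of "real n"] by auto
      thus "\<exists>s. \<forall>t. s \<le> t \<longrightarrow> real n < norm (P t)"
        unfolding cofinal_in_def by (auto simp: not_le)
    qed
    then obtain S :: "nat \<Rightarrow> 'i" where S: "\<And>n t. S n \<le> t \<Longrightarrow> real n < norm (P t)" by metis
    define T where "T = chainseq N S"
    have inc: "\<forall>n. T n < T (Suc n)" unfolding T_def using N by simp
    have ST: "\<And>n. S n \<le> T n"
    proof -
      fix n show "S n \<le> T n" unfolding T_def using N by (cases n) auto
    qed
    obtain t where t: "is_seq_sup T t" using chains inc by blast
    have "\<And>n. real n < norm (P t)"
      using S ST t unfolding is_seq_sup_def by (meson order.trans)
    moreover obtain n :: nat where "norm (P t) < real n" using reals_Archimedean2 by blast
    ultimately show False by (meson less_asym)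
  qed
qed

end
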